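(* Let $n$ be a positive integer. Define $z:J_n\to I_n$ by $z(A,B,C)=(A,\emptyset,BC)$, where $BC$ denotes the concatenation of $B$ followed by $C$. Then $z$ is a well-defined bijection from $J_n$ onto $I_n$.
   Context: A lattice path here is a finite (possibly empty) sequence of steps, each an up step $(1,1)$ or a down step $(1,-1)$, drawn as a polygonal line; concatenation $BC$ is the path consisting of the steps of $B$ followed by those of $C$. $T_n$ is the set of ordered triples $(A,B,C)$ of lattice paths such that for some nonnegative integers $i,j,k$ with $i+j+k=n$, $A$ has $i$ up and $i$ down steps, $B$ has $j$ up and $j$ down steps, and $C$ has $k$ up and $k$ down steps; each path in a triple is regarded as drawn starting (and hence ending) on the horizontal axis. $I_n$ is the set of $(A,B,C)\in T_n$ such that $B$ is empty and $C$ has both a point strictly above and a point strictly below the horizontal axis. $J_n$ is the set of $(A,B,C)\in T_n$ such that either (1) $B$ ends with a down step, $C$ is nonempty, and no point of $C$ is strictly above the horizontal axis, or (2) $B$ ends with an up step, $C$ is nonempty, and no point of $C$ is strictly below the horizontal axis. *)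

theory Defs
  imports Main
begin

text \<open>A lattice path is a list of steps: True = up step (1,1), False = down step (1,-1).
  The path is drawn starting at the origin on the horizontal axis.\<close>
type_synonym path = "bool list"

definition ups :: "path \<Rightarrow> nat" where
  "ups p = length (filter (\<lambda>s. s) p)"

definition downs :: "path \<Rightarrow> nat" where
  "downs p = length (filter (\<lambda>s. \<not> s) p)"

definition height :: "path \<Rightarrow> nat \<Rightarrow> int" where
  "height p m = (\<Sum>s\<leftarrow>take m p. if s then 1 else -1)"

text \<open>Some point of the polygonal line lies strictly above / below the axis
  (equivalently, some lattice vertex does, since the line is piecewise linear
  between vertices).\<close>
definition has_point_above :: "path \<Rightarrow> bool" where
  "has_point_above p \<longleftrightarrow> (\<exists>m\<le>length p. height p m > 0)"

definition has_point_below :: "path \<Rightarrow> bool" where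
  "has_point_below p \<longleftrightarrow> (\<exists>m\<le>length p. height p m < 0)"

definition T :: "nat \<Rightarrow> (path \<times> path \<times> path) set" where
  "T n = {(A,B,C). \<exists>i j k. i + j + k = n \<and>
      ups A = i \<and> downs A = i \<and> ups B = j \<and> downs B = j \<and> ups C = k \<and> downs C = k}"

definition I :: "nat \<Rightarrow> (path \<times> path \<times> path) set" where
  "I n = {(A,B,C) \<in> T n. B = [] \<and> has_point_above C \<and> has_point_below C}"

definition J :: "nat \<Rightarrow> (path \<times> path \<times> path) set" where
  "J n = {(A,B,C) \<in> T n.
      (B \<noteq> [] \<and> last B = False \<and> C \<noteq> [] \<and> \<not> has_point_above C) \<or>
      (B \<noteq> [] \<and> last B = True \<and> C \<noteq> [] \<and> \<not> has_point_below C)}"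

definition z :: "path \<times> path \<times> path \<Rightarrow> path \<times> path \<times> path" where
  "z t = (case t of (A,B,C) \<Rightarrow> (A, [], B @ C))"

end

theory Submission
  imports Defs
begin

lemma height_0[simp]: "height p 0 = 0"
  by (simp add: height_def)

lemma height_Suc: "m < length p \<Longrightarrow> height p (Suc m) = height p m + (if p!m then 1 else -1)"
  by (simp add: height_def take_Suc_conv_app_nth)

lemma height_len: "height p (length p) = int (ups p) - int (downs p)"
  by (induction p) (auto simp: height_def ups_def downs_def)

lemma height_app: "height (B@C) (length B + m) = height B (length B) + height C m"
  by (simp add: height_def)

lemma height_app_le: "m \<le> length B \<Longrightarrow> height (B@C) m = height B m"
  by (simp add: height_def)

lemma height_last: "B \<noteq> [] \<Longrightarrow> height B (length B) = height B (length B - 1) + (if last B then 1 else -1)"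
  using height_Suc[of "length B - 1" B] by (simp add: last_conv_nth)

lemma ups_app: "ups (B@C) = ups B + ups C" by (simp add: ups_def)
lemma downs_app: "downs (B@C) = downs B + downs C" by (simp add: downs_def)

lemma T_iff: "(A,B,C) \<in> T n \<longleftrightarrow> ups A = downs A \<and> ups B = downs B \<and> ups C = downs C \<and> ups A + ups B + ups C = n"
  by (auto simp: T_def)

lemma first_step: "C \<noteq> [] \<Longrightarrow> height C 1 = 1 \<or> height C 1 = -1"
  using height_Suc[of 0 C] by auto

lemma image_ok:
  assumes "t \<in> J n" shows "z t \<in> I n"
proof -
  obtain A B C where t: "t = (A,B,C)" by (cases t)
  have TT: "(A,B,C) \<in> T n" and BC: "B \<noteq> []" "C \<noteq> []" using assms t by (auto simp: J_def)
  have hB: "height B (length B) = 0" using TT by (simp add: T_iff height_len)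
  have hC1: "height (B@C) (length B + 1) = height C 1" using height_app[of B C 1] hB by simp
  have l1: "length B + 1 \<le> length (B@C)" using BC by (cases C) auto
  have l2: "length B - 1 \<le> length (B@C)" by simp
  have hB2: "height (B@C) (length B - 1) = height B (length B - 1)" by (rule height_app_le) simp
  have T2: "(A,[],B@C) \<in> T n" using TT by (simp add: T_iff ups_app downs_app ups_def downs_def)
  show ?thesis
  proof (cases "last B")
    case False
    then have "\<not> has_point_above C" using assms t by (auto simp: J_def)
    then have "height C 1 = -1" using first_step[OF BC(2)] BC(2)
      by (cases C) (auto simp: has_point_above_def)
    moreover have "height B (length B - 1) = 1" using height_last[OF BC(1)] False hB by simp
    ultimately have "has_point_above (B@C) \<and> has_point_below (B@C)"
      using hC1 hB2 l1 l2 unfolding has_point_above_def has_point_below_def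
      apply (intro conjI)
       apply (rule exI[of _ "length B - 1"]) apply (simp del: One_nat_def)
      apply (rule exI[of _ "length B + 1"]) apply (simp del: One_nat_def)
      done
    then show ?thesis using T2 t by (simp add: I_def z_def)
  next
    case True
    then have "\<not> has_point_below C" using assms t by (auto simp: J_def)
    then have "height C 1 = 1" using first_step[OF BC(2)] BC(2)
      by (cases C) (auto simp: has_point_below_def)
    moreover have "height B (length B - 1) = -1" using height_last[OF BC(1)] True hB by simp
    ultimately have "has_point_above (B@C) \<and> has_point_below (B@C)"
      using hC1 hB2 l1 l2 unfolding has_point_above_def has_point_below_def
      apply (intro conjI)
       apply (rule exI[of _ "length B + 1"]) apply (simp del: One_nat_def)
      apply (rule exI[of _ "length B - 1"]) apply (simp del: One_nat_def)
      done
    then show ?thesis using T2 t by (simp add: I_def z_def)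
  qed
qed


lemma inj_key:
  assumes J1: "(A,B1,C1) \<in> J n" and J2: "(A2,B2,C2) \<in> J n"
    and eq: "B1@C1 = B2@C2" and lt: "length B1 < length B2"
  shows False
proof -
  obtain X where X: "B2 = B1 @ X" "C1 = X @ C2"
    using eq lt by (auto simp: append_eq_append_conv2)
  have Xne: "X \<noteq> []" using X lt by auto
  have lastX: "last B2 = last X" using X Xne by simp
  have T1: "(A,B1,C1) \<in> T n" and T2: "(A2,B2,C2) \<in> T n" and C2ne: "C2 \<noteq> []"
    using J1 J2 by (auto simp: J_def)
  have hB1: "height B1 (length B1) = 0" using T1 by (simp add: T_iff height_len)
  have hB2: "height B2 (length B2) = 0" using T2 by (simp add: T_iff height_len)
  have hX: "height X (length X) = 0" using height_app[of B1 X "length X"] hB1 hB2 X by simp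
  have a1: "height C1 (length X + 1) = height C2 1" using height_app[of X C2 1] hX X by simp
  have a2: "height C1 (length X - 1) = height X (length X - 1)" using X by (simp add: height_app_le)
  have l1: "length X + 1 \<le> length C1" using X C2ne by (cases C2) auto
  have l2: "length X - 1 \<le> length C1" using X by simp
  have hl: "height X (length X - 1) = (if last X then -1 else 1)" using height_last[OF Xne] hX by (cases "last X") simp_all
  show False
  proof (cases "last B1")
    case False
    then have na: "\<not> has_point_above C1" using J1 by (auto simp: J_def)
    show False
    proof (cases "last X")
      case False then show False using na hl a2 l2 by (auto simp: has_point_above_def)
    next
      case True
      then have "\<not> has_point_below C2" using J2 lastX by (auto simp: J_def)
      then have "height C2 1 = 1" using first_step[OF C2ne] C2ne by (cases C2) (auto simp: has_point_below_def)
      then show False using na a1 l1 by (auto simp: has_point_above_def simp del: One_nat_def)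
    qed
  next
    case True
    then have na: "\<not> has_point_below C1" using J1 by (auto simp: J_def)
    show False
    proof (cases "last X")
      case True then show False using na hl a2 l2 by (auto simp: has_point_below_def)
    next
      case False
      then have "\<not> has_point_above C2" using J2 lastX by (auto simp: J_def)
      then have "height C2 1 = -1" using first_step[OF C2ne] C2ne by (cases C2) (auto simp: has_point_above_def)
      then show False using na a1 l1 by (auto simp: has_point_below_def simp del: One_nat_def)
    qed
  qed
qed

lemma inj_z: "inj_on z (J n)"
proof (rule inj_onI)
  fix s t assume s: "s \<in> J n" and t: "t \<in> J n" and e: "z s = z t"
  obtain A B C where sa: "s = (A,B,C)" by (cases s)
  obtain A' B' C' where ta: "t = (A',B',C')" by (cases t)
  have AA: "A = A'" and eq: "B@C = B'@C'" using e sa ta by (auto simp: z_def)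
  have "length B = length B'"
    using inj_key[of A B C n A' B' C'] inj_key[of A' B' C' n A B C] s t sa ta eq
    by (metis linorder_neqE_nat)
  then have "B = B'" "C = C'" using eq by auto
  then show "s = t" using sa ta AA by simp
qed


lemma split_T:
  assumes T0: "(A,[],D) \<in> T n" and hk: "height D k = 0" and kl: "k \<le> length D"
  shows "(A, take k D, drop k D) \<in> T n"
proof -
  let ?B = "take k D" and ?C = "drop k D"
  have D: "D = ?B @ ?C" by simp
  have lB: "length ?B = k" using kl by simp
  have hD: "height D (length D) = 0" using T0 by (simp add: T_iff height_len)
  have hB: "height ?B (length ?B) = 0" using hk lB height_app_le[of k ?B ?C] D by simp
  have "height D (length ?B + length ?C) = height ?B (length ?B) + height ?C (length ?C)"
    using height_app[of ?B ?C "length ?C"] D by simp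
  then have hC: "height ?C (length ?C) = 0" using hD hB kl by simp
  have "ups D = ups ?B + ups ?C" "downs D = downs ?B + downs ?C"
    using ups_app[of ?B ?C] downs_app[of ?B ?C] by simp_all
  moreover have "ups ?B = downs ?B" "ups ?C = downs ?C" using hB hC height_len[of ?B] height_len[of ?C] by linarith+
  ultimately show ?thesis using T0 by (simp add: T_iff ups_def downs_def)
qed

lemma drop_height:
  assumes "k \<le> length D" "height D k = 0" "m \<le> length (drop k D)"
  shows "height (drop k D) m = height D (k + m)"
proof -
  have "height (take k D @ drop k D) (length (take k D) + m) = height (take k D) (length (take k D)) + height (drop k D) m"
    by (rule height_app)
  moreover have "height (take k D) (length (take k D)) = 0"
    using assms height_app_le[of k "take k D" "drop k D"] by simp
  ultimately show ?thesis using assms(1) by simp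
qed

lemma surj_key:
  assumes Iin: "(A,[],D) \<in> I n"
  shows "\<exists>B C. D = B @ C \<and> (A,B,C) \<in> J n"
proof -
  let ?h = "height D" and ?N = "length D"
  have T0: "(A,[],D) \<in> T n" and ab: "has_point_above D" "has_point_below D" using Iin by (auto simp: I_def)
  have hN: "?h ?N = 0" using T0 by (simp add: T_iff height_len)
  define Q where "Q = {m. m \<le> ?N \<and> 0 < ?h m}"
  define R where "R = {m. m \<le> ?N \<and> ?h m < 0}"
  have fQ: "finite Q" "finite R" unfolding Q_def R_def by (auto intro: finite_subset[of _ "{..?N}"])
  have nQ: "Q \<noteq> {}" "R \<noteq> {}" using ab unfolding Q_def R_def has_point_above_def has_point_below_def by auto
  define q where "q = Max Q"
  define r where "r = Max R"
  have qQ: "q \<in> Q" "r \<in> R" unfolding q_def r_def using fQ nQ by (auto intro: Max_in)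
  have qmax: "\<And>m. m \<in> Q \<Longrightarrow> m \<le> q" "\<And>m. m \<in> R \<Longrightarrow> m \<le> r" unfolding q_def r_def using fQ by auto
  have "q \<noteq> r" using qQ unfolding Q_def R_def by auto
  then consider "q < r" | "r < q" by linarith
  then show ?thesis
  proof cases
    case 1
    define k where "k = Suc q"
    have kN: "k \<le> ?N" using 1 qQ unfolding k_def R_def by auto
    have qN: "q < ?N" using kN k_def by simp
    have hk: "?h k \<le> 0" using qmax(1)[of k] kN unfolding Q_def k_def by force
    have step: "?h k = ?h q + (if D!q then 1 else -1)" using height_Suc[OF qN] k_def by simp
    have hq: "?h q > 0" using qQ unfolding Q_def by auto
    have Dq: "D!q = False" and hk0: "?h k = 0" and hq1: "?h q = 1"
      using hk step hq by (auto split: if_splits)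
    have "k \<noteq> r" using hk0 qQ unfolding R_def by auto
    then have kN': "k < ?N" using 1 qQ unfolding k_def R_def by auto
    let ?B = "take k D" and ?C = "drop k D"
    have Bne: "?B \<noteq> []" and Cne: "?C \<noteq> []" using kN' k_def by auto
    have lastB: "last ?B = False" using Dq qN unfolding k_def by (simp add: take_Suc_conv_app_nth)
    have "\<not> has_point_above ?C"
    proof
      assume "has_point_above ?C"
      then obtain m where m: "m \<le> length ?C" "height ?C m > 0" unfolding has_point_above_def by auto
      then have "?h (k+m) > 0" using drop_height[OF kN hk0 m(1)] by simp
      moreover have "k + m \<le> ?N" using m kN by simp
      ultimately have "k + m \<le> q" using qmax(1) unfolding Q_def by auto
      then show False unfolding k_def by simp
    qed
    then have "(A,?B,?C) \<in> J n" using split_T[OF T0 hk0 kN] Bne Cne lastB by (simp add: J_def)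
    then show ?thesis by (intro exI[of _ ?B] exI[of _ ?C]) simp
  next
    case 2
    define k where "k = Suc r"
    have kN: "k \<le> ?N" using 2 qQ unfolding k_def Q_def by auto
    have qN: "r < ?N" using kN k_def by simp
    have hk: "?h k \<ge> 0" using qmax(2)[of k] kN unfolding R_def k_def by force
    have step: "?h k = ?h r + (if D!r then 1 else -1)" using height_Suc[OF qN] k_def by simp
    have hq: "?h r < 0" using qQ unfolding R_def by auto
    have Dq: "D!r = True" and hk0: "?h k = 0"
      using hk step hq by (auto split: if_splits)
    have "k \<noteq> q" using hk0 qQ unfolding Q_def by auto
    then have kN': "k < ?N" using 2 qQ unfolding k_def Q_def by auto
    let ?B = "take k D" and ?C = "drop k D"
    have Bne: "?B \<noteq> []" and Cne: "?C \<noteq> []" using kN' k_def by auto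
    have lastB: "last ?B = True" using Dq qN unfolding k_def by (simp add: take_Suc_conv_app_nth)
    have "\<not> has_point_below ?C"
    proof
      assume "has_point_below ?C"
      then obtain m where m: "m \<le> length ?C" "height ?C m < 0" unfolding has_point_below_def by auto
      then have "?h (k+m) < 0" using drop_height[OF kN hk0 m(1)] by simp
      moreover have "k + m \<le> ?N" using m kN by simp
      ultimately have "k + m \<le> r" using qmax(2) unfolding R_def by auto
      then show False unfolding k_def by simp
    qed
    then have "(A,?B,?C) \<in> J n" using split_T[OF T0 hk0 kN] Bne Cne lastB by (simp add: J_def)
    then show ?thesis by (intro exI[of _ ?B] exI[of _ ?C]) simp
  qed
qed

theorem lemma4:
  fixes n :: nat
  assumes "n > 0"
  shows "z ` J n \<subseteq> I n \<and> bij_betw z (J n) (I n)"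
proof -
  have sub: "z ` J n \<subseteq> I n" using image_ok by blast
  have "I n \<subseteq> z ` J n"
  proof
    fix t assume t: "t \<in> I n"
    obtain A B D where ta: "t = (A,B,D)" by (cases t)
    have B: "B = []" using t ta by (auto simp: I_def)
    obtain B' C where "D = B' @ C" "(A,B',C) \<in> J n" using surj_key t ta B by blast
    then show "t \<in> z ` J n" using ta B by (auto simp: z_def intro!: image_eqI[of _ _ "(A,B',C)"])
  qed
  with sub show ?thesis using inj_z by (auto simp: bij_betw_def)
qed

end
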